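(* Let $W$ be a set of words in $\mathcal U^*$, all of the same length. Then $\sum_{\mathsf w\in W}\mathsf w\in I_{\mathrm S}^\perp$ if and only if $W$ is the vertex set of a switchboard.
   Context: $\mathcal U=\mathbb Z\langle u_1,\dots,u_N\rangle$; $\mathcal U^*$ is the free $\mathbb Z$-module on words in $\{1,\dots,N\}$ with pairing $\langle\mathbf u_{\mathsf w},\mathsf v\rangle=\delta_{\mathsf{vw}}$ where $\mathbf u_{\mathsf w}=u_{\mathsf w_1}\cdots u_{\mathsf w_n}$; $I^\perp$ is the annihilator of $I$. $I_{\mathrm S}$ is the two-sided ideal generated by $u_b^2u_a+u_au_bu_a-u_bu_au_b-u_bu_a^2$ ($b-a=1$), $u_b^2u_a-u_bu_au_b$ ($b-a\ge2$), $u_bu_a^2-u_au_bu_a$ ($b-a\ge2$), $u_bu_cu_a+u_au_cu_b-u_bu_au_c-u_cu_au_b$ ($a<b<c$). Two words $\mathsf w,\mathsf w'$ of length $n$ are related by a switch in position $i$ ($2\le i\le n-1$) if $\mathsf w_j=\mathsf w'_j$ for $j\notin\{i-1,i,i+1\}$ and the unordered pair $\{\mathsf w_{i-1}\mathsf w_i\mathsf w_{i+1},\mathsf w'_{i-1}\mathsf w'_i\mathsf w'_{i+1}\}$ is one of: $\{bac,bca\}$ or $\{acb,cab\}$ with $a<b<c$ (Knuth switch); $\{bac,acb\}$ or $\{bca,cab\}$ with $a<b<c$ (rotation switch); $\{bab,bba\}$ or $\{aba,baa\}$ with $a<b$ (Knuth switch); $\{bab,aba\}$ or $\{bba,baa\}$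 with $b=a+1$ (braid/idempotent switch). A switchboard is an edge-labeled graph on a vertex set of words of a fixed length $n$ in $\{1,\dots,N\}$, with edge labels in $\{2,\dots,n-1\}$, such that each edge labeled $i$ joins two words related by a switch in position $i$, and each vertex having exactly one descent among positions $i-1$ and $i$ (i.e. exactly one of $\mathsf w_{i-1}>\mathsf w_i$, $\mathsf w_i>\mathsf w_{i+1}$ holds) lies on exactly one edge labeled $i$. *)

theory Defs
  imports Main
begin

text \<open>Elements of the free algebra
  U = Z<u_1,...,u_N> are represented as finitely supported functions
  from words to integers (coefficient of the monomial u_w); elements of the
  dual module U^* likewise as integer-valued functions on words.\<close>

type_synonym word = "nat list"
type_synonym ncpoly = "word \<Rightarrow> int"

definition is_word :: "nat \<Rightarrow> word \<Rightarrow> bool" where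
  "is_word N w \<longleftrightarrow> set w \<subseteq> {1..N}"

definition supp :: "ncpoly \<Rightarrow> word set" where
  "supp p = {w. p w \<noteq> 0}"

definition in_U :: "nat \<Rightarrow> ncpoly \<Rightarrow> bool" where
  "in_U N p \<longleftrightarrow> finite (supp p) \<and> (\<forall>w\<in>supp p. is_word N w)"

definition mon :: "word \<Rightarrow> ncpoly" where
  "mon w = (\<lambda>v. if v = w then 1 else 0)"

definition ncadd :: "ncpoly \<Rightarrow> ncpoly \<Rightarrow> ncpoly" where
  "ncadd p q = (\<lambda>w. p w + q w)"

definition ncsub :: "ncpoly \<Rightarrow> ncpoly \<Rightarrow> ncpoly" where
  "ncsub p q = (\<lambda>w. p w - q w)"

definition ncmul :: "ncpoly \<Rightarrow> ncpoly \<Rightarrow> ncpoly" where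
  "ncmul p q = (\<lambda>w. \<Sum>i\<le>length w. p (take i w) * q (drop i w))"

definition IS_gens :: "nat \<Rightarrow> ncpoly set" where
  "IS_gens N =
     {ncsub (ncadd (mon [b,b,a]) (mon [a,b,a])) (ncadd (mon [b,a,b]) (mon [b,a,a]))
        | a b. 1 \<le> a \<and> b \<le> N \<and> b = a + 1}
   \<union> {ncsub (mon [b,b,a]) (mon [b,a,b]) | a b. 1 \<le> a \<and> b \<le> N \<and> b \<ge> a + 2}
   \<union> {ncsub (mon [b,a,a]) (mon [a,b,a]) | a b. 1 \<le> a \<and> b \<le> N \<and> b \<ge> a + 2}
   \<union> {ncsub (ncadd (mon [b,c,a]) (mon [a,c,b])) (ncadd (mon [b,a,c]) (mon [c,a,b]))
        | a b c. 1 \<le> a \<and> a < b \<and> b < c \<and> c \<le> N}"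

inductive_set IS_ideal :: "nat \<Rightarrow> ncpoly set" for N :: nat where
  gen: "r \<in> IS_gens N \<Longrightarrow> r \<in> IS_ideal N"
| zero: "(\<lambda>_. 0) \<in> IS_ideal N"
| add: "p \<in> IS_ideal N \<Longrightarrow> q \<in> IS_ideal N \<Longrightarrow> ncadd p q \<in> IS_ideal N"
| lmul: "in_U N a \<Longrightarrow> p \<in> IS_ideal N \<Longrightarrow> ncmul a p \<in> IS_ideal N"
| rmul: "in_U N a \<Longrightarrow> p \<in> IS_ideal N \<Longrightarrow> ncmul p a \<in> IS_ideal N"

definition pairing :: "ncpoly \<Rightarrow> ncpoly \<Rightarrow> int" where
  "pairing p f = (\<Sum>w\<in>supp p. p w * f w)"

definition IS_perp :: "nat \<Rightarrow> ncpoly set" where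
  "IS_perp N = {f. in_U N f \<and> (\<forall>p\<in>IS_ideal N. pairing p f = 0)}"

definition wsum :: "word set \<Rightarrow> ncpoly" where
  "wsum W = (\<lambda>v. \<Sum>w\<in>W. if v = w then 1 else 0)"

text \<open>1-indexed letter access: letter w j = w_j.\<close>
definition letter :: "word \<Rightarrow> nat \<Rightarrow> nat" where
  "letter w j = w ! (j - 1)"

definition triple_pair :: "nat \<times> nat \<times> nat \<Rightarrow> nat \<times> nat \<times> nat \<Rightarrow> bool" where
  "triple_pair t t' \<longleftrightarrow>
     (\<exists>a b c. a < b \<and> b < c \<and>
        ((t, t') = ((b,a,c), (b,c,a)) \<or> (t, t') = ((a,c,b), (c,a,b)) \<or>
         (t, t') = ((b,a,c), (a,c,b)) \<or> (t, t') = ((b,c,a), (c,a,b)))) \<or>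
     (\<exists>a b. a < b \<and>
        ((t, t') = ((b,a,b), (b,b,a)) \<or> (t, t') = ((a,b,a), (b,a,a)))) \<or>
     (\<exists>a b. b = a + 1 \<and>
        ((t, t') = ((b,a,b), (a,b,a)) \<or> (t, t') = ((b,b,a), (b,a,a))))"

definition triple_switch :: "nat \<times> nat \<times> nat \<Rightarrow> nat \<times> nat \<times> nat \<Rightarrow> bool" where
  "triple_switch t t' \<longleftrightarrow> triple_pair t t' \<or> triple_pair t' t"

definition triple_at :: "word \<Rightarrow> nat \<Rightarrow> nat \<times> nat \<times> nat" where
  "triple_at w i = (letter w (i - 1), letter w i, letter w (i + 1))"

definition switch :: "nat \<Rightarrow> nat \<Rightarrow> word \<Rightarrow> word \<Rightarrow> bool" where
  "switch n i w w' \<longleftrightarrow>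
     length w = n \<and> length w' = n \<and> 2 \<le> i \<and> i \<le> n - 1 \<and>
     (\<forall>j\<in>{1..n}. j \<notin> {i - 1, i, i + 1} \<longrightarrow> letter w j = letter w' j) \<and>
     triple_switch (triple_at w i) (triple_at w' i)"

definition descent :: "word \<Rightarrow> nat \<Rightarrow> bool" where
  "descent w j \<longleftrightarrow> letter w j > letter w (j + 1)"

text \<open>A switchboard: an edge-labelled graph with vertex set V (words of length n
  over {1..N}); each edge is a pair (e, i) with e = {w, w'} an unordered pair of
  vertices and label i in {2..n-1}.\<close>
definition switchboard :: "nat \<Rightarrow> nat \<Rightarrow> word set \<Rightarrow> (word set \<times> nat) set \<Rightarrow> bool" where
  "switchboard N n V E \<longleftrightarrow>
     (\<forall>w\<in>V. length w = n \<and> is_word N w) \<and>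
     (\<forall>(e, i)\<in>E. 2 \<le> i \<and> i \<le> n - 1 \<and>
        (\<exists>w w'. e = {w, w'} \<and> w \<in> V \<and> w' \<in> V \<and> switch n i w w')) \<and>
     (\<forall>w\<in>V. \<forall>i. 2 \<le> i \<and> i \<le> n - 1 \<and> (descent w (i - 1) \<noteq> descent w i) \<longrightarrow>
        (\<exists>!e. (e, i) \<in> E \<and> w \<in> e))"

end

theory Submission
  imports Defs
begin


definition FF :: "word set \<Rightarrow> ncpoly \<Rightarrow> word \<Rightarrow> word \<Rightarrow> int" where
  "FF W p x y = (\<Sum>w\<in>{w. x@w@y \<in> W}. p w)"

lemma fin_ctx: "finite W \<Longrightarrow> finite {w. x@w@y \<in> W}"
proof -
  assume f: "finite W"
  have "{w. x@w@y \<in> W} = (\<lambda>w. x@w@y) -` W" by auto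
  moreover have "finite ((\<lambda>w. x@w@y) -` W)"
    by (rule finite_vimageI[OF f]) (auto simp: inj_on_def)
  ultimately show ?thesis by simp
qed

definition QQ :: "word set \<Rightarrow> word \<Rightarrow> word \<Rightarrow> (word \<times> word) set" where
  "QQ W x y = {(u,v). x@u@v@y \<in> W}"

lemma QQ_img: "QQ W x y = (\<lambda>(w,i). (take i w, drop i w)) ` (SIGMA w:{w. x@w@y \<in> W}. {..length w})"
proof (intro set_eqI iffI)
  fix z assume "z \<in> QQ W x y"
  then obtain u v where z: "z = (u,v)" "x@u@v@y \<in> W" by (auto simp: QQ_def)
  then show "z \<in> (\<lambda>(w,i). (take i w, drop i w)) ` (SIGMA w:{w. x@w@y \<in> W}. {..length w})"
    by (intro image_eqI[of _ _ "(u@v, length u)"]) auto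
next
  fix z assume "z \<in> (\<lambda>(w,i). (take i w, drop i w)) ` (SIGMA w:{w. x@w@y \<in> W}. {..length w})"
  then obtain w i where "z = (take i w, drop i w)" "x@w@y \<in> W" by auto
  then show "z \<in> QQ W x y" by (auto simp: QQ_def simp del: append_take_drop_id
     intro: back_subst[of "\<lambda>z. z \<in> W"] ) (metis append_assoc append_take_drop_id)
qed

lemma fin_ctx2: "finite W \<Longrightarrow> finite {v. x@u@v@y \<in> W}"
  using fin_ctx[of W "x@u" y] by simp

lemma fin_ctx3: "finite W \<Longrightarrow> finite {u. x@u@v@y \<in> W}"
  using fin_ctx[of W x "v@y"] by simp

lemma sum_mon: "finite A \<Longrightarrow> (\<Sum>a\<in>A. mon u a * G a) = (if u \<in> A then G u else (0::int))"
proof -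
  assume "finite A"
  have "\<And>a. mon u a * G a = (if a = u then G a else 0)" by (simp add: mon_def)
  then show ?thesis using \<open>finite A\<close> by simp
qed

lemma fin_QQ: "finite W \<Longrightarrow> finite (QQ W x y)"
  unfolding QQ_img by (intro finite_imageI finite_SigmaI fin_ctx) auto

lemma FF_mul: assumes f: "finite W"
  shows "FF W (ncmul a p) x y = (\<Sum>(u,v)\<in>QQ W x y. a u * p v)"
proof -
  let ?S = "{w. x@w@y \<in> W}"
  have "FF W (ncmul a p) x y = (\<Sum>w\<in>?S. \<Sum>i\<le>length w. a (take i w) * p (drop i w))"
    by (simp add: FF_def ncmul_def)
  also have "\<dots> = (\<Sum>(w,i)\<in>(SIGMA w:?S. {..length w}). a (take i w) * p (drop i w))"
    by (rule sum.Sigma) (auto intro: fin_ctx f)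
  also have "\<dots> = (\<Sum>(u,v)\<in>QQ W x y. a u * p v)"
    by (rule sum.reindex_bij_witness[where i = "\<lambda>(u,v). (u@v, length u)"
          and j = "\<lambda>(w,i). (take i w, drop i w)"]) (auto simp: QQ_def min_def,
           metis append_assoc append_take_drop_id)
  finally show ?thesis .
qed

lemma FF_lmul: assumes f: "finite W"
  shows "FF W (ncmul a p) x y = (\<Sum>u\<in>fst ` QQ W x y. a u * FF W p (x@u) y)"
proof -
  have Q: "QQ W x y = (SIGMA u:fst ` QQ W x y. {v. x@u@v@y \<in> W})"
    by (force simp: QQ_def)
  have "FF W (ncmul a p) x y = (\<Sum>(u,v)\<in>(SIGMA u:fst ` QQ W x y. {v. x@u@v@y \<in> W}). a u * p v)"
    using FF_mul[OF f] Q by simp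
  also have "\<dots> = (\<Sum>u\<in>fst ` QQ W x y. \<Sum>v\<in>{v. x@u@v@y \<in> W}. a u * p v)"
    by (rule sum.Sigma[symmetric]) (auto intro: fin_ctx2 fin_ctx3 f finite_imageI fin_QQ)
  also have "\<dots> = (\<Sum>u\<in>fst ` QQ W x y. a u * FF W p (x@u) y)"
    by (simp add: FF_def sum_distrib_left)
  finally show ?thesis .
qed

lemma FF_rmul: assumes f: "finite W"
  shows "FF W (ncmul p a) x y = (\<Sum>v\<in>snd ` QQ W x y. a v * FF W p x (v@y))"
proof -
  have Q: "QQ W x y = (\<lambda>(v,u). (u,v)) ` (SIGMA v:snd ` QQ W x y. {u. x@u@v@y \<in> W})"
    by (force simp: QQ_def)
  have inj: "inj_on (\<lambda>(v,u). (u,v)) (SIGMA v:snd ` QQ W x y. {u. x@u@v@y \<in> W})"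
    by (auto simp: inj_on_def)
  have "FF W (ncmul p a) x y = (\<Sum>(v,u)\<in>(SIGMA v:snd ` QQ W x y. {u. x@u@v@y \<in> W}). p u * a v)"
    unfolding FF_mul[OF f] by (subst Q, subst sum.reindex[OF inj]) (simp add: case_prod_unfold)
  also have "\<dots> = (\<Sum>v\<in>snd ` QQ W x y. \<Sum>u\<in>{u. x@u@v@y \<in> W}. p u * a v)"
    by (rule sum.Sigma[symmetric]) (auto intro: fin_ctx2 fin_ctx3 f finite_imageI fin_QQ)
  also have "\<dots> = (\<Sum>v\<in>snd ` QQ W x y. a v * FF W p x (v@y))"
    by (simp add: FF_def sum_distrib_left mult.commute)
  finally show ?thesis .
qed

lemma FF_add: "finite W \<Longrightarrow> FF W (ncadd p q) x y = FF W p x y + FF W q x y"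
  by (simp add: FF_def ncadd_def sum.distrib)
lemma FF_sub: "finite W \<Longrightarrow> FF W (ncsub p q) x y = FF W p x y - FF W q x y"
  by (simp add: FF_def ncsub_def sum_subtractf)
lemma FF_mon: "finite W \<Longrightarrow> FF W (mon t) x y = of_bool (x@t@y \<in> W)"
  by (simp add: FF_def mon_def fin_ctx)

lemma FF_mon_l: assumes f: "finite W" shows "FF W (ncmul (mon u) p) x y = FF W p (x@u) y"
proof -
  have "FF W (ncmul (mon u) p) x y = (if u \<in> fst ` QQ W x y then FF W p (x@u) y else 0)"
    unfolding FF_lmul[OF f] by (simp add: sum_mon fin_QQ[OF f] finite_imageI)
  moreover have "u \<notin> fst ` QQ W x y \<Longrightarrow> FF W p (x@u) y = 0"
    by (auto simp: FF_def QQ_def image_iff intro!: sum.neutral)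
  ultimately show ?thesis by auto
qed

lemma FF_mon_r: assumes f: "finite W" shows "FF W (ncmul p (mon v)) x y = FF W p x (v@y)"
proof -
  have "FF W (ncmul p (mon v)) x y = (if v \<in> snd ` QQ W x y then FF W p x (v@y) else 0)"
    unfolding FF_rmul[OF f] by (simp add: sum_mon fin_QQ[OF f] finite_imageI)
  moreover have "v \<notin> snd ` QQ W x y \<Longrightarrow> FF W p x (v@y) = 0"
    by (auto simp: FF_def QQ_def image_iff intro!: sum.neutral)
  ultimately show ?thesis by auto
qed



fun tw :: "nat \<times> nat \<times> nat \<Rightarrow> word" where "tw (a,b,c) = [a,b,c]"

definition ind :: "word set \<Rightarrow> word \<Rightarrow> word \<Rightarrow> nat \<times> nat \<times> nat \<Rightarrow> int" where
  "ind W x y t = of_bool (x @ tw t @ y \<in> W)"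

definition LB :: "nat \<Rightarrow> word set \<Rightarrow> bool" where
  "LB N W \<longleftrightarrow> (\<forall>x y.
     (\<forall>a b. 1 \<le> a \<and> b \<le> N \<and> b = a + 1 \<longrightarrow>
        ind W x y (b,b,a) + ind W x y (a,b,a) = ind W x y (b,a,b) + ind W x y (b,a,a)) \<and>
     (\<forall>a b. 1 \<le> a \<and> b \<le> N \<and> b \<ge> a + 2 \<longrightarrow> ind W x y (b,b,a) = ind W x y (b,a,b)) \<and>
     (\<forall>a b. 1 \<le> a \<and> b \<le> N \<and> b \<ge> a + 2 \<longrightarrow> ind W x y (b,a,a) = ind W x y (a,b,a)) \<and>
     (\<forall>a b c. 1 \<le> a \<and> a < b \<and> b < c \<and> c \<le> N \<longrightarrow>
        ind W x y (b,c,a) + ind W x y (a,c,b) = ind W x y (b,a,c) + ind W x y (c,a,b)))"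

lemma supp_add: "supp (ncadd p q) \<subseteq> supp p \<union> supp q" by (auto simp: supp_def ncadd_def)
lemma supp_sub: "supp (ncsub p q) \<subseteq> supp p \<union> supp q" by (auto simp: supp_def ncsub_def)
lemma supp_mon: "supp (mon w) = {w}" by (auto simp: supp_def mon_def)
lemma supp_mul: "supp (ncmul p q) \<subseteq> (\<lambda>(u,v). u@v) ` (supp p \<times> supp q)"
proof
  fix w assume "w \<in> supp (ncmul p q)"
  then have "(\<Sum>i\<le>length w. p (take i w) * q (drop i w)) \<noteq> 0"
    unfolding supp_def ncmul_def by simp
  then obtain i where "p (take i w) * q (drop i w) \<noteq> 0"
    using sum.not_neutral_contains_not_neutral by blast
  then show "w \<in> (\<lambda>(u,v). u@v) ` (supp p \<times> supp q)"
    by (intro image_eqI[of _ _ "(take i w, drop i w)"]) (auto simp: supp_def)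
qed

lemma fin_add: "finite (supp p) \<Longrightarrow> finite (supp q) \<Longrightarrow> finite (supp (ncadd p q))"
  by (meson finite_UnI finite_subset supp_add)
lemma fin_sub: "finite (supp p) \<Longrightarrow> finite (supp q) \<Longrightarrow> finite (supp (ncsub p q))"
  by (meson finite_UnI finite_subset supp_sub)
lemma fin_mul: "finite (supp p) \<Longrightarrow> finite (supp q) \<Longrightarrow> finite (supp (ncmul p q))"
  by (rule finite_subset[OF supp_mul]) (intro finite_imageI finite_cartesian_product)

lemma fin_g4: "finite (supp (ncsub (ncadd (mon A) (mon B)) (ncadd (mon C) (mon D))))"
  by (intro fin_add fin_sub) (simp_all add: supp_mon)
lemma fin_g2: "finite (supp (ncsub (mon A) (mon B)))"
  by (intro fin_sub) (simp_all add: supp_mon)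

lemma fin_gens: "r \<in> IS_gens N \<Longrightarrow> finite (supp r)"
  unfolding IS_gens_def by (elim UnE CollectE exE conjE) (simp_all only: fin_g4 fin_g2)

lemma fin_ideal: "p \<in> IS_ideal N \<Longrightarrow> finite (supp p)"
proof (induction rule: IS_ideal.induct)
  case (gen r) then show ?case by (rule fin_gens)
next
  case zero then show ?case by (simp add: supp_def)
next
  case (add p q) then show ?case by (simp add: fin_add)
next
  case (lmul a p) then show ?case by (intro fin_mul) (auto simp: in_U_def)
next
  case (rmul a p) then show ?case by (intro fin_mul) (auto simp: in_U_def)
qed

lemma wsum_eq: "finite W \<Longrightarrow> wsum W v = (if v \<in> W then 1 else 0)"
  by (simp add: wsum_def)

lemma pairing_FF: assumes f: "finite W" and fp: "finite (supp p)"
  shows "pairing p (wsum W) = FF W p [] []"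
proof -
  have "pairing p (wsum W) = (\<Sum>w\<in>supp p. p w * of_bool (w \<in> W))"
    unfolding pairing_def using f by (simp add: wsum_eq of_bool_def)
  also have "\<dots> = (\<Sum>w\<in>supp p \<inter> W. p w)" using fp by (simp add: Int_def)
  also have "\<dots> = (\<Sum>w\<in>W. p w)"
    by (rule sum.mono_neutral_left) (auto simp: f supp_def)
  finally show ?thesis by (simp add: FF_def)
qed

lemma LB_D1: "LB N W \<Longrightarrow> 1 \<le> a \<Longrightarrow> b \<le> N \<Longrightarrow> b = a + 1 \<Longrightarrow>
   ind W x y (b,b,a) + ind W x y (a,b,a) = ind W x y (b,a,b) + ind W x y (b,a,a)"
  unfolding LB_def by blast
lemma LB_D2: "LB N W \<Longrightarrow> 1 \<le> a \<Longrightarrow> b \<le> N \<Longrightarrow> b \<ge> a + 2 \<Longrightarrow> ind W x y (b,b,a) = ind W x y (b,a,b)"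
  unfolding LB_def by blast
lemma LB_D3: "LB N W \<Longrightarrow> 1 \<le> a \<Longrightarrow> b \<le> N \<Longrightarrow> b \<ge> a + 2 \<Longrightarrow> ind W x y (b,a,a) = ind W x y (a,b,a)"
  unfolding LB_def by blast
lemma LB_D4: "LB N W \<Longrightarrow> 1 \<le> a \<Longrightarrow> a < b \<Longrightarrow> b < c \<Longrightarrow> c \<le> N \<Longrightarrow>
   ind W x y (b,c,a) + ind W x y (a,c,b) = ind W x y (b,a,c) + ind W x y (c,a,b)"
  unfolding LB_def by blast

lemma gens_FF: assumes f: "finite W" and L: "LB N W" and r: "r \<in> IS_gens N"
  shows "FF W r x y = 0"
  using r unfolding IS_gens_def
proof (elim UnE)
  assume "r \<in> {ncsub (ncadd (mon [b,b,a]) (mon [a,b,a])) (ncadd (mon [b,a,b]) (mon [b,a,a]))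
        | a b. 1 \<le> a \<and> b \<le> N \<and> b = a + 1}"
  then obtain a b where "r = ncsub (ncadd (mon [b,b,a]) (mon [a,b,a])) (ncadd (mon [b,a,b]) (mon [b,a,a]))"
    "1 \<le> a" "b \<le> N" "b = a + 1" by blast
  then show ?thesis using LB_D1[OF L, of a b x y]
    by (simp add: FF_add[OF f] FF_sub[OF f] FF_mon[OF f] ind_def)
next
  assume "r \<in> {ncsub (mon [b,b,a]) (mon [b,a,b]) | a b. 1 \<le> a \<and> b \<le> N \<and> b \<ge> a + 2}"
  then obtain a b where "r = ncsub (mon [b,b,a]) (mon [b,a,b])" "1 \<le> a" "b \<le> N" "b \<ge> a + 2" by blast
  then show ?thesis using LB_D2[OF L, of a b x y]
    by (simp add: FF_add[OF f] FF_sub[OF f] FF_mon[OF f] ind_def)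
next
  assume "r \<in> {ncsub (mon [b,a,a]) (mon [a,b,a]) | a b. 1 \<le> a \<and> b \<le> N \<and> b \<ge> a + 2}"
  then obtain a b where "r = ncsub (mon [b,a,a]) (mon [a,b,a])" "1 \<le> a" "b \<le> N" "b \<ge> a + 2" by blast
  then show ?thesis using LB_D3[OF L, of a b x y]
    by (simp add: FF_add[OF f] FF_sub[OF f] FF_mon[OF f] ind_def)
next
  assume "r \<in> {ncsub (ncadd (mon [b,c,a]) (mon [a,c,b])) (ncadd (mon [b,a,c]) (mon [c,a,b]))
        | a b c. 1 \<le> a \<and> a < b \<and> b < c \<and> c \<le> N}"
  then obtain a b c where "r = ncsub (ncadd (mon [b,c,a]) (mon [a,c,b])) (ncadd (mon [b,a,c]) (mon [c,a,b]))"
    "1 \<le> a" "a < b" "b < c" "c \<le> N" by blast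
  then show ?thesis using LB_D4[OF L, of a b c x y]
    by (simp add: FF_add[OF f] FF_sub[OF f] FF_mon[OF f] ind_def)
qed

lemma ideal_FF: assumes f: "finite W" and L: "LB N W"
  shows "p \<in> IS_ideal N \<Longrightarrow> \<forall>x y. FF W p x y = 0"
proof (induction rule: IS_ideal.induct)
  case (gen r) then show ?case using gens_FF[OF f L] by blast
next
  case zero then show ?case by (simp add: FF_def)
next
  case (add p q) then show ?case by (simp add: FF_add[OF f])
next
  case (lmul a p) then show ?case by (simp add: FF_lmul[OF f])
next
  case (rmul a p) then show ?case by (simp add: FF_rmul[OF f])
qed

lemma mon_inU: "is_word N x \<Longrightarrow> in_U N (mon x)"
  by (simp add: in_U_def supp_mon)

lemma step1: assumes f: "finite W" and wd: "\<forall>w\<in>W. length w = n \<and> is_word N w"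
  shows "wsum W \<in> IS_perp N \<longleftrightarrow> LB N W"
proof
  assume L: "LB N W"
  have "in_U N (wsum W)"
    using f wd by (auto simp: in_U_def supp_def wsum_eq)
  moreover have "\<forall>p\<in>IS_ideal N. pairing p (wsum W) = 0"
    using ideal_FF[OF f L] pairing_FF[OF f] fin_ideal by auto
  ultimately show "wsum W \<in> IS_perp N" by (simp add: IS_perp_def)
next
  assume P: "wsum W \<in> IS_perp N"
  have key: "FF W g x y = 0" if g: "g \<in> IS_gens N" for g x y
  proof (cases "is_word N x \<and> is_word N y")
    case True
    let ?p = "ncmul (mon x) (ncmul g (mon y))"
    have pI: "?p \<in> IS_ideal N"
      using True g by (intro IS_ideal.lmul IS_ideal.rmul IS_ideal.gen mon_inU) auto
    have "FF W g x y = FF W ?p [] []" by (simp add: FF_mon_l[OF f] FF_mon_r[OF f])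
    also have "\<dots> = pairing ?p (wsum W)" using pairing_FF[OF f fin_ideal[OF pI]] by simp
    also have "\<dots> = 0" using P pI by (simp add: IS_perp_def)
    finally show ?thesis .
  next
    case False
    have "{w. x@w@y \<in> W} = {}"
    proof (rule ccontr)
      assume "{w. x@w@y \<in> W} \<noteq> {}"
      then obtain w where "x@w@y \<in> W" by auto
      then have "set (x@w@y) \<subseteq> {1..N}" using wd unfolding is_word_def by blast
      then show False using False by (auto simp: is_word_def)
    qed
    then show ?thesis by (simp add: FF_def)
  qed
  show "LB N W" unfolding LB_def
  proof (intro allI conjI impI)
    fix x y a b assume "1 \<le> a \<and> b \<le> N \<and> b = a + 1"
    then have "FF W (ncsub (ncadd (mon [b,b,a]) (mon [a,b,a])) (ncadd (mon [b,a,b]) (mon [b,a,a]))) x y = 0"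
      by (intro key, unfold IS_gens_def) blast
    then show "ind W x y (b,b,a) + ind W x y (a,b,a) = ind W x y (b,a,b) + ind W x y (b,a,a)"
      by (simp add: FF_add[OF f] FF_sub[OF f] FF_mon[OF f] ind_def)
  next
    fix x y a b assume "1 \<le> a \<and> b \<le> N \<and> b \<ge> a + 2"
    then have "FF W (ncsub (mon [b,b,a]) (mon [b,a,b])) x y = 0"
      by (intro key, unfold IS_gens_def) blast
    then show "ind W x y (b,b,a) = ind W x y (b,a,b)"
      by (simp add: FF_add[OF f] FF_sub[OF f] FF_mon[OF f] ind_def)
  next
    fix x y a b assume "1 \<le> a \<and> b \<le> N \<and> b \<ge> a + 2"
    then have "FF W (ncsub (mon [b,a,a]) (mon [a,b,a])) x y = 0"
      by (intro key, unfold IS_gens_def) blast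
    then show "ind W x y (b,a,a) = ind W x y (a,b,a)"
      by (simp add: FF_add[OF f] FF_sub[OF f] FF_mon[OF f] ind_def)
  next
    fix x y a b c assume "1 \<le> a \<and> a < b \<and> b < c \<and> c \<le> N"
    then have "FF W (ncsub (ncadd (mon [b,c,a]) (mon [a,c,b])) (ncadd (mon [b,a,c]) (mon [c,a,b]))) x y = 0"
      by (intro key, unfold IS_gens_def) blast
    then show "ind W x y (b,c,a) + ind W x y (a,c,b) = ind W x y (b,a,c) + ind W x y (c,a,b)"
      by (simp add: FF_add[OF f] FF_sub[OF f] FF_mon[OF f] ind_def)
  qed
qed



definition od :: "nat \<times> nat \<times> nat \<Rightarrow> bool" where
  "od t = (case t of (p,q,r) \<Rightarrow> (q < p) \<noteq> (r < q))"

fun knuth :: "nat \<times> nat \<times> nat \<Rightarrow> nat \<times> nat \<times> nat" where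
  "knuth (p,q,r) = (if (q<p \<and> p\<le>r) \<or> (r<p \<and> p\<le>q) then (p,r,q) else (q,p,r))"

fun other :: "nat \<times> nat \<times> nat \<Rightarrow> nat \<times> nat \<times> nat" where
  "other (p,q,r) = (if p\<noteq>q \<and> q\<noteq>r \<and> p\<noteq>r then
      (if (q<p \<and> p<r) \<or> (r<p \<and> p<q) then (q,r,p) else (r,p,q))
    else if p = r then (q,p,q) else if p = q then (p,r,r) else (p,p,q))"

fun has_other :: "nat \<times> nat \<times> nat \<Rightarrow> bool" where
  "has_other (p,q,r) = ((p\<noteq>q \<and> q\<noteq>r \<and> p\<noteq>r) \<or> (p = r \<and> (q = p + 1 \<or> p = q + 1))
      \<or> (p = q \<and> p = r + 1) \<or> (q = r \<and> p = q + 1))"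

lemma ts_sym: "triple_switch t t' \<longleftrightarrow> triple_switch t' t"
  by (auto simp: triple_switch_def)

lemma ts_od: "triple_switch t t' \<Longrightarrow> od t \<and> od t'"
  by (auto simp: triple_switch_def triple_pair_def od_def)

lemma ts_ne: "triple_switch t t' \<Longrightarrow> t \<noteq> t'"
  by (auto simp: triple_switch_def triple_pair_def)

lemma E1: "a<b \<Longrightarrow> b<c \<Longrightarrow> triple_pair (b,a,c) (b,c,a)" unfolding triple_pair_def by blast
lemma E2: "a<b \<Longrightarrow> b<c \<Longrightarrow> triple_pair (a,c,b) (c,a,b)" unfolding triple_pair_def by blast
lemma E3: "a<b \<Longrightarrow> b<c \<Longrightarrow> triple_pair (b,a,c) (a,c,b)" unfolding triple_pair_def by blast
lemma E4: "a<b \<Longrightarrow> b<c \<Longrightarrow> triple_pair (b,c,a) (c,a,b)" unfolding triple_pair_def by blast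
lemma E5: "a<b \<Longrightarrow> triple_pair (b,a,b) (b,b,a)" unfolding triple_pair_def by blast
lemma E6: "a<b \<Longrightarrow> triple_pair (a,b,a) (b,a,a)" unfolding triple_pair_def by blast
lemma E7: "b=a+1 \<Longrightarrow> triple_pair (b,a,b) (a,b,a)" unfolding triple_pair_def by blast
lemma E8: "b=a+1 \<Longrightarrow> triple_pair (b,b,a) (b,a,a)" unfolding triple_pair_def by blast

lemma shapes:
  assumes "od (p,q,r)"
  shows "(q<p \<and> p<r) \<or> (r<p \<and> p<q) \<or> (p<r \<and> r<q) \<or> (q<r \<and> r<p) \<or>
    (q<p \<and> p=r) \<or> (p<q \<and> p=r) \<or> (r<p \<and> p=q) \<or> (q<p \<and> q=r)"
  using assms by (auto simp: od_def)

lemma K1: "od t \<Longrightarrow> triple_switch t (knuth t)"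
proof (cases t)
  case (fields p q r)
  assume "od t"
  then have "od (p,q,r)" using fields by simp
  from shapes[OF this] have "triple_switch (p,q,r) (knuth (p,q,r))"
  proof (elim disjE conjE)
    assume "q<p" "p<r" then show ?thesis using E1[of q p r] by (simp add: triple_switch_def)
  next
    assume "r<p" "p<q" then show ?thesis using E1[of r p q] by (simp add: triple_switch_def)
  next
    assume "p<r" "r<q" then show ?thesis using E2[of p r q] by (simp add: triple_switch_def)
  next
    assume "q<r" "r<p" then show ?thesis using E2[of q r p] by (simp add: triple_switch_def)
  next
    assume "q<p" "p=r" then show ?thesis using E5[of q p] by (simp add: triple_switch_def)
  next
    assume "p<q" "p=r" then show ?thesis using E6[of p q] by (simp add: triple_switch_def)
  next
    assume "r<p" "p=q" then show ?thesis using E5[of r p] by (simp add: triple_switch_def)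
  next
    assume "q<p" "q=r" then show ?thesis using E6[of q p] by (simp add: triple_switch_def)
  qed
  then show ?thesis using fields by simp
qed

lemma K2: "od t \<Longrightarrow> knuth (knuth t) = t"
  by (cases t) (auto simp: od_def)

lemma O1: "od t \<Longrightarrow> has_other t \<Longrightarrow> triple_switch t (other t)"
proof (cases t)
  case (fields p q r)
  assume "od t" "has_other t"
  then have "od (p,q,r)" "has_other (p,q,r)" using fields by simp_all
  from shapes[OF this(1)] this(2) have "triple_switch (p,q,r) (other (p,q,r))"
  proof (elim disjE conjE)
    assume "q<p" "p<r" then show ?thesis using E3[of q p r] by (simp add: triple_switch_def)
  next
    assume "r<p" "p<q" then show ?thesis using E4[of r p q] by (simp add: triple_switch_def)
  next
    assume "p<r" "r<q" then show ?thesis using E3[of p r q] by (simp add: triple_switch_def)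
  next
    assume "q<r" "r<p" then show ?thesis using E4[of q r p] by (simp add: triple_switch_def)
  next
    assume "q<p" "p=r" "has_other (p,q,r)" then show ?thesis using E7[of p q] by (auto simp: triple_switch_def)
  next
    assume "p<q" "p=r" "has_other (p,q,r)" then show ?thesis using E7[of q p] by (auto simp: triple_switch_def)
  next
    assume "r<p" "p=q" "has_other (p,q,r)" then show ?thesis using E8[of p r] by (auto simp: triple_switch_def)
  next
    assume "q<p" "q=r" "has_other (p,q,r)" then show ?thesis using E8[of p q] by (auto simp: triple_switch_def)
  qed
  then show ?thesis using fields by simp
qed

lemma O2: "od t \<Longrightarrow> has_other t \<Longrightarrow> other (other t) = t"
  by (cases t) (auto simp: od_def)


definition inr :: "nat \<Rightarrow> nat \<times> nat \<times> nat \<Rightarrow> bool" where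
  "inr N t = (case t of (p,q,r) \<Rightarrow> 1 \<le> p \<and> p \<le> N \<and> 1 \<le> q \<and> q \<le> N \<and> 1 \<le> r \<and> r \<le> N)"

definition LBP :: "nat \<Rightarrow> (nat \<times> nat \<times> nat \<Rightarrow> bool) \<Rightarrow> bool" where
  "LBP N P \<longleftrightarrow>
     (\<forall>a b. 1 \<le> a \<and> b \<le> N \<and> b = a + 1 \<longrightarrow>
        (of_bool (P (b,b,a)) + of_bool (P (a,b,a)) :: int) = of_bool (P (b,a,b)) + of_bool (P (b,a,a))) \<and>
     (\<forall>a b. 1 \<le> a \<and> b \<le> N \<and> b \<ge> a + 2 \<longrightarrow> (of_bool (P (b,b,a)) :: int) = of_bool (P (b,a,b))) \<and>
     (\<forall>a b. 1 \<le> a \<and> b \<le> N \<and> b \<ge> a + 2 \<longrightarrow> (of_bool (P (b,a,a)) :: int) = of_bool (P (a,b,a))) \<and>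
     (\<forall>a b c. 1 \<le> a \<and> a < b \<and> b < c \<and> c \<le> N \<longrightarrow>
        (of_bool (P (b,c,a)) + of_bool (P (a,c,b)) :: int) = of_bool (P (b,a,c)) + of_bool (P (c,a,b)))"

lemma LB_LBP: "LB N W \<Longrightarrow> LBP N (\<lambda>t. x @ tw t @ y \<in> W)"
  unfolding LB_def LBP_def ind_def by simp

lemma LBP_D1: "LBP N P \<Longrightarrow> 1 \<le> a \<Longrightarrow> b \<le> N \<Longrightarrow> b = a + 1 \<Longrightarrow>
   (of_bool (P (b,b,a)) + of_bool (P (a,b,a)) :: int) = of_bool (P (b,a,b)) + of_bool (P (b,a,a))"
  unfolding LBP_def by blast
lemma LBP_D2: "LBP N P \<Longrightarrow> 1 \<le> a \<Longrightarrow> b \<le> N \<Longrightarrow> b \<ge> a + 2 \<Longrightarrow> P (b,b,a) = P (b,a,b)"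
  unfolding LBP_def by (metis of_bool_eq_iff)
lemma LBP_D3: "LBP N P \<Longrightarrow> 1 \<le> a \<Longrightarrow> b \<le> N \<Longrightarrow> b \<ge> a + 2 \<Longrightarrow> P (b,a,a) = P (a,b,a)"
  unfolding LBP_def by (metis of_bool_eq_iff)
lemma LBP_D4: "LBP N P \<Longrightarrow> 1 \<le> a \<Longrightarrow> a < b \<Longrightarrow> b < c \<Longrightarrow> c \<le> N \<Longrightarrow>
   (of_bool (P (b,c,a)) + of_bool (P (a,c,b)) :: int) = of_bool (P (b,a,c)) + of_bool (P (c,a,b))"
  unfolding LBP_def by blast

lemma ob4: "((of_bool A + of_bool B :: int) = of_bool C + of_bool D) \<longleftrightarrow>
  ((A \<longleftrightarrow> C) \<and> (B \<longleftrightarrow> D)) \<or> ((A \<longleftrightarrow> D) \<and> (B \<longleftrightarrow> C))"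
  by (cases A; cases B; cases C; cases D) auto

lemma BAL:
  assumes L: "LBP N P" and o: "od t" and rg: "inr N t" and Pt: "P t" and nk: "\<not> P (knuth t)"
  shows "has_other t \<and> P (other t) \<and> \<not> P (knuth (other t))"
proof (cases t)
  case (fields p q r)
  have rg': "1 \<le> p" "p \<le> N" "1 \<le> q" "q \<le> N" "1 \<le> r" "r \<le> N" using rg fields by (auto simp: inr_def)
  have Pt': "P (p,q,r)" using Pt fields by simp
  have nk': "\<not> P (knuth (p,q,r))" using nk fields by simp
  from o fields have "od (p,q,r)" by simp
  from shapes[OF this] have "has_other (p,q,r) \<and> P (other (p,q,r)) \<and> \<not> P (knuth (other (p,q,r)))"
  proof (elim disjE conjE)
    assume "q<p" "p<r" then show ?thesis using LBP_D4[OF L, of q p r, unfolded ob4] rg' Pt' nk' by auto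
  next
    assume "r<p" "p<q" then show ?thesis using LBP_D4[OF L, of r p q, unfolded ob4] rg' Pt' nk' by auto
  next
    assume "p<r" "r<q" then show ?thesis using LBP_D4[OF L, of p r q, unfolded ob4] rg' Pt' nk' by auto
  next
    assume "q<r" "r<p" then show ?thesis using LBP_D4[OF L, of q r p, unfolded ob4] rg' Pt' nk' by auto
  next
    assume "q<p" "p=r" then show ?thesis using LBP_D1[OF L, of q p, unfolded ob4] LBP_D2[OF L, of q p] rg' Pt' nk'
      by (cases "p = q + 1") (auto split: if_splits)
  next
    assume "p<q" "p=r" then show ?thesis using LBP_D1[OF L, of p q, unfolded ob4] LBP_D3[OF L, of p q] rg' Pt' nk'
      by (cases "q = p + 1") (auto split: if_splits)
  next
    assume "r<p" "p=q" then show ?thesis using LBP_D1[OF L, of r p, unfolded ob4] LBP_D2[OF L, of r p] rg' Pt' nk'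
      by (cases "p = r + 1") (auto split: if_splits)
  next
    assume "q<p" "q=r" then show ?thesis using LBP_D1[OF L, of q p, unfolded ob4] LBP_D3[OF L, of q p] rg' Pt' nk'
      by (cases "p = q + 1") (auto split: if_splits)
  qed
  then show ?thesis using fields by simp
qed

definition sig :: "(nat \<times> nat \<times> nat \<Rightarrow> bool) \<Rightarrow> nat \<times> nat \<times> nat \<Rightarrow> nat \<times> nat \<times> nat" where
  "sig P t = (if P (knuth t) then knuth t else other t)"

lemma sig_ok:
  assumes L: "LBP N P" and o: "od t" and rg: "inr N t" and Pt: "P t"
  shows "P (sig P t) \<and> triple_switch t (sig P t) \<and> sig P (sig P t) = t"
proof (cases "P (knuth t)")
  case True
  then show ?thesis using K1[OF o] K2[OF o] Pt by (simp add: sig_def)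
next
  case False
  from BAL[OF L o rg Pt False] have h: "has_other t" "P (other t)" "\<not> P (knuth (other t))" by auto
  then show ?thesis using O1[OF o h(1)] O2[OF o h(1)] False by (simp add: sig_def)
qed



lemma tw_len[simp]: "length (tw t) = 3" by (cases t) simp

lemma tw_inj: "tw t = tw t' \<Longrightarrow> t = t'" by (cases t; cases t') simp

lemma ctx_inj: "x @ tw t @ y = x' @ tw t' @ y' \<Longrightarrow> length x = length x' \<Longrightarrow> x = x' \<and> t = t' \<and> y = y'"
proof -
  assume e: "x @ tw t @ y = x' @ tw t' @ y'" and l: "length x = length x'"
  then have "x = x'" "tw t @ y = tw t' @ y'" by (auto simp: append_eq_append_conv)
  moreover then have "tw t = tw t'" "y = y'" by (auto simp: append_eq_append_conv)
  ultimately show ?thesis using tw_inj by blast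
qed

lemma triple_at_ctx: "triple_at (x @ tw t @ y) (length x + 2) = t"
  by (cases t) (simp add: triple_at_def letter_def nth_append)

lemma take_ctx: "take (length x) (x @ tw t @ y) = x" by simp
lemma drop_ctx: "drop (length x + 3) (x @ tw t @ y) = y" by simp

lemma desc_ctx: "(descent (x @ tw t @ y) (length x + 2 - 1) \<noteq> descent (x @ tw t @ y) (length x + 2)) \<longleftrightarrow> od t"
  by (cases t) (simp add: descent_def letter_def nth_append od_def)

lemma decomp:
  assumes "length w = n" "2 \<le> i" "i \<le> n - 1"
  shows "w = take (i-2) w @ tw (triple_at w i) @ drop (i+1) w"
proof -
  define k where "k = i - 2"
  have k: "Suc (Suc (Suc k)) \<le> length w" "i = Suc (Suc k)" using assms by (auto simp: k_def)
  have d: "drop k w = w!k # w!(Suc k) # w!(Suc (Suc k)) # drop (Suc (Suc (Suc k))) w"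
    using k(1) by (simp add: Cons_nth_drop_Suc)
  have t: "triple_at w i = (w!k, w!(Suc k), w!(Suc (Suc k)))"
    using k by (simp add: triple_at_def letter_def)
  have "w = take k w @ drop k w" by simp
  also have "\<dots> = take k w @ tw (triple_at w i) @ drop (Suc (Suc (Suc k))) w"
    by (simp only: d t tw.simps append_Cons append_Nil)
  finally show ?thesis using k by simp
qed

lemma switch_sym: "switch n i w w' \<longleftrightarrow> switch n i w' w"
  unfolding switch_def using ts_sym by (metis)

lemma switch_ctx:
  "switch n (length x + 2) (x @ tw t @ y) w' \<longleftrightarrow>
    length x + 3 + length y = n \<and> (\<exists>t'. w' = x @ tw t' @ y \<and> triple_switch t t')"
proof
  let ?w = "x @ tw t @ y" let ?i = "length x + 2"
  assume S: "switch n ?i ?w w'"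
  then have len: "length ?w = n" "length w' = n" and ag: "\<forall>j\<in>{1..n}. j \<notin> {?i - 1, ?i, ?i + 1} \<longrightarrow> letter ?w j = letter w' j"
    and ts: "triple_switch (triple_at ?w ?i) (triple_at w' ?i)"
    by (auto simp: switch_def)
  have n: "n = length x + 3 + length y" using len by simp
  have d: "w' = take (?i-2) w' @ tw (triple_at w' ?i) @ drop (?i+1) w'"
    by (rule decomp[OF len(2)]) (auto simp: n)
  have tk: "take (length x) w' = x"
  proof (rule nth_equalityI)
    show "length (take (length x) w') = length x" using len n by simp
    fix k assume "k < length (take (length x) w')"
    then have k: "k < length x" by simp
    have "letter ?w (k+1) = letter w' (k+1)" using ag k n by auto
    then show "take (length x) w' ! k = x ! k" using k by (simp add: letter_def nth_append)
  qed
  have dr: "drop (length x + 3) w' = y"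
  proof (rule nth_equalityI)
    show "length (drop (length x + 3) w') = length y" using len n by simp
    fix k assume "k < length (drop (length x + 3) w')"
    then have k: "k < length y" using len n by simp
    have "letter ?w (length x + 4 + k) = letter w' (length x + 4 + k)" using ag k n by auto
    then show "drop (length x + 3) w' ! k = y ! k" using k len n
      by (simp add: letter_def nth_append add.commute add.left_commute)
  qed
  have "w' = x @ tw (triple_at w' ?i) @ y" using d tk dr by (simp add: numeral_3_eq_3)
  moreover have "triple_switch t (triple_at w' ?i)" using ts triple_at_ctx[of x t y] by simp
  ultimately show "length x + 3 + length y = n \<and> (\<exists>t'. w' = x @ tw t' @ y \<and> triple_switch t t')"
    using n by blast
next
  let ?w = "x @ tw t @ y" let ?i = "length x + 2"
  assume "length x + 3 + length y = n \<and> (\<exists>t'. w' = x @ tw t' @ y \<and> triple_switch t t')"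
  then obtain t' where n: "length x + 3 + length y = n" and w': "w' = x @ tw t' @ y" and ts: "triple_switch t t'"
    by blast
  have ag: "letter ?w j = letter w' j" if "j \<in> {1..n}" "j \<notin> {?i - 1, ?i, ?i + 1}" for j
  proof -
    have "j - 1 < length x \<or> j - 1 \<ge> length x + 3" using that by auto
    then show ?thesis using w' by (auto simp: letter_def nth_append)
  qed
  show "switch n ?i ?w w'" unfolding switch_def
    using n ag ts w' triple_at_ctx[of x t y] triple_at_ctx[of x t' y] by auto
qed



lemma side_le:
  assumes SB: "switchboard N n W E" and oA: "\<forall>t\<in>A. od t" and oB: "\<forall>t\<in>B. od t"
    and dis: "A \<inter> B = {}" and cl: "\<forall>t\<in>A. \<forall>t'. triple_switch t t' \<longrightarrow> t' \<in> B"
    and fB: "finite B"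
  shows "card {t\<in>A. x @ tw t @ y \<in> W} \<le> card {t\<in>B. x @ tw t @ y \<in> W}"
proof -
  define i where "i = length x + 2"
  define P where "P t = (x @ tw t @ y \<in> W)" for t
  have V: "\<forall>w\<in>W. length w = n \<and> is_word N w"
    and Ed: "\<forall>(e, i)\<in>E. 2 \<le> i \<and> i \<le> n - 1 \<and> (\<exists>w w'. e = {w, w'} \<and> w \<in> W \<and> w' \<in> W \<and> switch n i w w')"
    and U: "\<forall>w\<in>W. \<forall>i. 2 \<le> i \<and> i \<le> n - 1 \<and> (descent w (i - 1) \<noteq> descent w i) \<longrightarrow> (\<exists>!e. (e, i) \<in> E \<and> w \<in> e)"
    using SB by (auto simp: switchboard_def)
  have uniq: "\<exists>!e. (e, i) \<in> E \<and> x @ tw t @ y \<in> e" if "od t" "P t" for t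
  proof -
    have w: "x @ tw t @ y \<in> W" using that by (simp add: P_def)
    then have n: "n = length x + 3 + length y" using V by auto
    show ?thesis using U w that(1) desc_ctx[of x t y] unfolding i_def n by auto
  qed
  have ex: "\<exists>t'. t' \<in> B \<and> P t' \<and> ({x @ tw t @ y, x @ tw t' @ y}, i) \<in> E" if tA: "t \<in> A" "P t" for t
  proof -
    from uniq[OF oA[rule_format, OF tA(1)] tA(2)] obtain e where e: "(e, i) \<in> E" "x @ tw t @ y \<in> e" by auto
    from Ed e(1) obtain u u' where uu: "e = {u, u'}" "u \<in> W" "u' \<in> W" "switch n i u u'" by blast
    obtain v where v: "e = {x @ tw t @ y, v}" "v \<in> W" "switch n i (x @ tw t @ y) v"
      using uu e(2) switch_sym by (metis insert_commute insertE singletonD)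
    then obtain t' where t': "v = x @ tw t' @ y" "triple_switch t t'"
      using switch_ctx[of n x t y v] unfolding i_def by auto
    then show ?thesis using cl[rule_format, OF tA(1) t'(2)] v e unfolding P_def by blast
  qed
  define g where "g t = (SOME t'. t' \<in> B \<and> P t' \<and> ({x @ tw t @ y, x @ tw t' @ y}, i) \<in> E)" for t
  have g: "g t \<in> B \<and> P (g t) \<and> ({x @ tw t @ y, x @ tw (g t) @ y}, i) \<in> E" if "t \<in> A" "P t" for t
    unfolding g_def using someI_ex[OF ex[OF that]] .
  have inj: "inj_on g {t\<in>A. P t}"
  proof (rule inj_onI)
    fix t1 t2 assume t1: "t1 \<in> {t\<in>A. P t}" and t2: "t2 \<in> {t\<in>A. P t}" and eq: "g t1 = g t2"
    let ?s = "g t1"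
    have s: "?s \<in> B" "P ?s" using g t1 by auto
    have e1: "({x @ tw t1 @ y, x @ tw ?s @ y}, i) \<in> E" using g t1 by auto
    have e2: "({x @ tw t2 @ y, x @ tw ?s @ y}, i) \<in> E" using g[of t2] t2 eq by auto
    have U1: "\<And>e e'. (e,i)\<in>E \<Longrightarrow> x @ tw ?s @ y \<in> e \<Longrightarrow> (e',i)\<in>E \<Longrightarrow> x @ tw ?s @ y \<in> e' \<Longrightarrow> e = e'"
      using uniq[OF oB[rule_format, OF s(1)] s(2)] by blast
    have "{x @ tw t1 @ y, x @ tw ?s @ y} = {x @ tw t2 @ y, x @ tw ?s @ y}"
      by (rule U1[OF e1 _ e2]) auto
    moreover have "t1 \<noteq> ?s" using t1 s dis by auto
    ultimately have "x @ tw t1 @ y = x @ tw t2 @ y"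
      using ctx_inj by (metis doubleton_eq_iff)
    then show "t1 = t2" using ctx_inj by blast
  qed
  have "card {t\<in>A. P t} \<le> card {t\<in>B. P t}"
    by (rule card_inj_on_le[OF inj]) (use g fB in auto)
  then show ?thesis by (simp add: P_def)
qed

lemma side_eq:
  assumes SB: "switchboard N n W E" and oA: "\<forall>t\<in>A. od t" and oB: "\<forall>t\<in>B. od t"
    and dis: "A \<inter> B = {}" and cl: "\<forall>t\<in>A. \<forall>t'. triple_switch t t' \<longrightarrow> t' \<in> B"
    and cl2: "\<forall>t\<in>B. \<forall>t'. triple_switch t t' \<longrightarrow> t' \<in> A"
    and fA: "finite A" and fB: "finite B"
  shows "card {t\<in>A. x @ tw t @ y \<in> W} = card {t\<in>B. x @ tw t @ y \<in> W}"
proof -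
  have d2: "B \<inter> A = {}" using dis by auto
  from side_le[OF SB oA oB dis cl fB, of x y] side_le[OF SB oB oA d2 cl2 fA, of x y]
  show ?thesis by (rule le_antisym)
qed

lemma card2: "p1 \<noteq> p2 \<Longrightarrow> int (card {t \<in> {p1,p2}. P t}) = of_bool (P p1) + of_bool (P p2)"
proof -
  assume ne: "p1 \<noteq> p2"
  have "{t \<in> {p1,p2}. P t} = (if P p1 then {p1} else {}) \<union> (if P p2 then {p2} else {})" by auto
  then show ?thesis using ne by (cases "P p1"; cases "P p2") simp_all
qed

lemma card1: "int (card {t \<in> {p1}. P t}) = of_bool (P p1)"
proof -
  have "{t \<in> {p1}. P t} = (if P p1 then {p1} else {})" by auto
  then show ?thesis by simp
qed



lemma cl1: "b = a + 1 \<Longrightarrow> \<forall>t\<in>{(b,b,a),(a,b,a)}. \<forall>t'. triple_switch t t' \<longrightarrow> t' \<in> {(b,a,b),(b,a,a)}"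
  by (auto simp: triple_switch_def triple_pair_def)
lemma cl1': "b = a + 1 \<Longrightarrow> \<forall>t\<in>{(b,a,b),(b,a,a)}. \<forall>t'. triple_switch t t' \<longrightarrow> t' \<in> {(b,b,a),(a,b,a)}"
  by (auto simp: triple_switch_def triple_pair_def)
lemma cl2: "b \<ge> a + 2 \<Longrightarrow> \<forall>t\<in>{(b,b,a)}. \<forall>t'. triple_switch t t' \<longrightarrow> t' \<in> {(b,a,b)}"
  by (auto simp: triple_switch_def triple_pair_def)
lemma cl2': "b \<ge> a + 2 \<Longrightarrow> \<forall>t\<in>{(b,a,b)}. \<forall>t'. triple_switch t t' \<longrightarrow> t' \<in> {(b,b,a)}"
  by (auto simp: triple_switch_def triple_pair_def)
lemma cl3: "b \<ge> a + 2 \<Longrightarrow> \<forall>t\<in>{(b,a,a)}. \<forall>t'. triple_switch t t' \<longrightarrow> t' \<in> {(a,b,a)}"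
  by (auto simp: triple_switch_def triple_pair_def)
lemma cl3': "b \<ge> a + 2 \<Longrightarrow> \<forall>t\<in>{(a,b,a)}. \<forall>t'. triple_switch t t' \<longrightarrow> t' \<in> {(b,a,a)}"
  by (auto simp: triple_switch_def triple_pair_def)
lemma cl4: "a < b \<Longrightarrow> b < c \<Longrightarrow> \<forall>t\<in>{(b,c,a),(a,c,b)}. \<forall>t'. triple_switch t t' \<longrightarrow> t' \<in> {(b,a,c),(c,a,b)}"
  by (auto simp: triple_switch_def triple_pair_def)
lemma cl4': "a < b \<Longrightarrow> b < c \<Longrightarrow> \<forall>t\<in>{(b,a,c),(c,a,b)}. \<forall>t'. triple_switch t t' \<longrightarrow> t' \<in> {(b,c,a),(a,c,b)}"
  by (auto simp: triple_switch_def triple_pair_def)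

lemma sb_LB: assumes SB: "switchboard N n W E" shows "LB N W"
  unfolding LB_def
proof (intro allI conjI impI)
  fix x y a b assume h: "1 \<le> a \<and> b \<le> N \<and> b = a + 1"
  have "card {t\<in>{(b,b,a),(a,b,a)}. x @ tw t @ y \<in> W} = card {t\<in>{(b,a,b),(b,a,a)}. x @ tw t @ y \<in> W}"
    by (rule side_eq[OF SB _ _ _ cl1 cl1']) (use h in \<open>auto simp: od_def\<close>)
  then have "int (card {t\<in>{(b,b,a),(a,b,a)}. x @ tw t @ y \<in> W}) = int (card {t\<in>{(b,a,b),(b,a,a)}. x @ tw t @ y \<in> W})"
    by simp
  moreover have "int (card {t\<in>{(b,b,a),(a,b,a)}. x @ tw t @ y \<in> W}) = ind W x y (b,b,a) + ind W x y (a,b,a)"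
    unfolding ind_def by (rule card2) (use h in auto)
  moreover have "int (card {t\<in>{(b,a,b),(b,a,a)}. x @ tw t @ y \<in> W}) = ind W x y (b,a,b) + ind W x y (b,a,a)"
    unfolding ind_def by (rule card2) (use h in auto)
  ultimately show "ind W x y (b,b,a) + ind W x y (a,b,a) = ind W x y (b,a,b) + ind W x y (b,a,a)"
    by linarith
next
  fix x y a b assume h: "1 \<le> a \<and> b \<le> N \<and> b \<ge> a + 2"
  have "card {t\<in>{(b,b,a)}. x @ tw t @ y \<in> W} = card {t\<in>{(b,a,b)}. x @ tw t @ y \<in> W}"
    by (rule side_eq[OF SB _ _ _ cl2 cl2']) (use h in \<open>auto simp: od_def\<close>)
  then have "int (card {t\<in>{(b,b,a)}. x @ tw t @ y \<in> W}) = int (card {t\<in>{(b,a,b)}. x @ tw t @ y \<in> W})"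
    by simp
  then show "ind W x y (b,b,a) = ind W x y (b,a,b)"
    by (simp only: card1 ind_def)
next
  fix x y a b assume h: "1 \<le> a \<and> b \<le> N \<and> b \<ge> a + 2"
  have "card {t\<in>{(b,a,a)}. x @ tw t @ y \<in> W} = card {t\<in>{(a,b,a)}. x @ tw t @ y \<in> W}"
    by (rule side_eq[OF SB _ _ _ cl3 cl3']) (use h in \<open>auto simp: od_def\<close>)
  then have "int (card {t\<in>{(b,a,a)}. x @ tw t @ y \<in> W}) = int (card {t\<in>{(a,b,a)}. x @ tw t @ y \<in> W})"
    by simp
  then show "ind W x y (b,a,a) = ind W x y (a,b,a)"
    by (simp only: card1 ind_def)
next
  fix x y a b c assume h: "1 \<le> a \<and> a < b \<and> b < c \<and> c \<le> N"
  have "card {t\<in>{(b,c,a),(a,c,b)}. x @ tw t @ y \<in> W} = card {t\<in>{(b,a,c),(c,a,b)}. x @ tw t @ y \<in> W}"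
    by (rule side_eq[OF SB _ _ _ cl4 cl4']) (use h in \<open>auto simp: od_def\<close>)
  then have "int (card {t\<in>{(b,c,a),(a,c,b)}. x @ tw t @ y \<in> W}) = int (card {t\<in>{(b,a,c),(c,a,b)}. x @ tw t @ y \<in> W})"
    by simp
  moreover have "int (card {t\<in>{(b,c,a),(a,c,b)}. x @ tw t @ y \<in> W}) = ind W x y (b,c,a) + ind W x y (a,c,b)"
    unfolding ind_def by (rule card2) (use h in auto)
  moreover have "int (card {t\<in>{(b,a,c),(c,a,b)}. x @ tw t @ y \<in> W}) = ind W x y (b,a,c) + ind W x y (c,a,b)"
    unfolding ind_def by (rule card2) (use h in auto)
  ultimately show "ind W x y (b,c,a) + ind W x y (a,c,b) = ind W x y (b,a,c) + ind W x y (c,a,b)"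
    by linarith
qed



definition PP :: "word set \<Rightarrow> word \<Rightarrow> nat \<Rightarrow> nat \<times> nat \<times> nat \<Rightarrow> bool" where
  "PP W w i = (\<lambda>t. take (i-2) w @ tw t @ drop (i+1) w \<in> W)"

definition partner :: "word set \<Rightarrow> word \<Rightarrow> nat \<Rightarrow> word" where
  "partner W w i = take (i-2) w @ tw (sig (PP W w i) (triple_at w i)) @ drop (i+1) w"

lemma partner_ctx: "partner W (x @ tw t @ y) (length x + 2) = x @ tw (sig (\<lambda>t. x @ tw t @ y \<in> W) t) @ y"
proof -
  have "triple_at (x @ tw t @ y) (length x + 2) = t" by (rule triple_at_ctx)
  then show ?thesis unfolding partner_def PP_def by (simp add: numeral_3_eq_3)
qed

lemma ctx_of:
  assumes "length w = n" "2 \<le> i" "i \<le> n - 1"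
  obtains x t y where "w = x @ tw t @ y" "i = length x + 2" "t = triple_at w i"
proof -
  have w: "w = take (i-2) w @ tw (triple_at w i) @ drop (i+1) w" by (rule decomp[OF assms])
  have ii: "i = length (take (i-2) w) + 2" using assms by auto
  show ?thesis by (rule that[OF w ii refl])
qed

lemma desc_od:
  assumes "length w = n" "2 \<le> i" "i \<le> n - 1"
  shows "(descent w (i - 1) \<noteq> descent w i) \<longleftrightarrow> od (triple_at w i)"
proof -
  obtain x t y where w: "w = x @ tw t @ y" "i = length x + 2" "t = triple_at w i" using ctx_of[OF assms] .
  show ?thesis unfolding w(3)[symmetric] unfolding w(1) w(2) by (rule desc_ctx)
qed

lemma partner_props:
  assumes L: "LB N W" and V: "\<forall>w\<in>W. length w = n \<and> is_word N w" and wW: "w \<in> W"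
    and i: "2 \<le> i" "i \<le> n - 1" and o: "od (triple_at w i)"
  shows "partner W w i \<in> W \<and> switch n i w (partner W w i) \<and> partner W (partner W w i) i = w"
proof -
  have len: "length w = n" using V wW by auto
  obtain x t y where w: "w = x @ tw t @ y" "i = length x + 2" "t = triple_at w i" using ctx_of[OF len i] .
  define P where "P = (\<lambda>t. x @ tw t @ y \<in> W)"
  have LP: "LBP N P" unfolding P_def by (rule LB_LBP[OF L])
  have "set w \<subseteq> {1..N}" using V wW by (auto simp: is_word_def)
  then have "set (tw t) \<subseteq> {1..N}" using w(1) by auto
  then have rg: "inr N t" by (cases t) (auto simp: inr_def)
  have Pt: "P t" using wW w(1) by (simp add: P_def)
  have ot: "od t" using o w(3) by simp
  from sig_ok[OF LP ot rg Pt] have s: "P (sig P t)" "triple_switch t (sig P t)" "sig P (sig P t) = t" by auto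
  have pw: "partner W w i = x @ tw (sig P t) @ y" using partner_ctx[of W x t y] w(1,2) by (simp add: P_def)
  have n: "length x + 3 + length y = n" using len w(1) by simp
  have "partner W w i \<in> W" using pw s(1) by (simp add: P_def)
  moreover have "switch n i w (partner W w i)"
  proof -
    have "switch n (length x + 2) (x @ tw t @ y) (x @ tw (sig P t) @ y)"
      using switch_ctx[of n x t y "x @ tw (sig P t) @ y"] n s(2) by blast
    then show ?thesis using pw w(1,2) by simp
  qed
  moreover have "partner W (partner W w i) i = w"
    using partner_ctx[of W x "sig P t" y] pw w(1,2) s(3) by (simp add: P_def)
  ultimately show ?thesis by blast
qed

lemma LB_sb:
  assumes L: "LB N W" and V: "\<forall>w\<in>W. length w = n \<and> is_word N w"
  shows "switchboard N n W {({w, partner W w i}, i) | w i. w \<in> W \<and> 2 \<le> i \<and> i \<le> n - 1 \<and> od (triple_at w i)}"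
    (is "switchboard N n W ?E")
  unfolding switchboard_def
proof (intro conjI)
  show "\<forall>w\<in>W. length w = n \<and> is_word N w" using V by auto
next
  show "\<forall>ei\<in>?E. case ei of (e, i) \<Rightarrow> 2 \<le> i \<and> i \<le> n - 1 \<and>
        (\<exists>w w'. e = {w, w'} \<and> w \<in> W \<and> w' \<in> W \<and> switch n i w w')"
  proof
  fix ei assume "ei \<in> ?E"
  then obtain w i where ei: "ei = ({w, partner W w i}, i)" and h: "w \<in> W" "2 \<le> i" "i \<le> n - 1" "od (triple_at w i)"
    by blast
  from partner_props[OF L V h] show "case ei of (e, i) \<Rightarrow> 2 \<le> i \<and> i \<le> n - 1 \<and>
        (\<exists>w w'. e = {w, w'} \<and> w \<in> W \<and> w' \<in> W \<and> switch n i w w')"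
    using ei h by auto
  qed
next
  show "\<forall>w\<in>W. \<forall>i. 2 \<le> i \<and> i \<le> n - 1 \<and> descent w (i - 1) \<noteq> descent w i \<longrightarrow> (\<exists>!e. (e, i) \<in> ?E \<and> w \<in> e)"
  proof (intro ballI allI impI)
  fix w i assume wW: "w \<in> W" and hi: "2 \<le> i \<and> i \<le> n - 1 \<and> descent w (i - 1) \<noteq> descent w i"
  have len: "length w = n" using V wW by auto
  have o: "od (triple_at w i)" using desc_od[OF len] hi by auto
  show "\<exists>!e. (e, i) \<in> ?E \<and> w \<in> e"
  proof (rule ex1I[of _ "{w, partner W w i}"])
    show "({w, partner W w i}, i) \<in> ?E \<and> w \<in> {w, partner W w i}" using wW hi o by blast
  next
    fix e assume "(e, i) \<in> ?E \<and> w \<in> e"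
    then obtain w0 where e: "e = {w0, partner W w0 i}" and h0: "w0 \<in> W" "2 \<le> i" "i \<le> n - 1" "od (triple_at w0 i)"
      and we: "w \<in> e" by blast
    have pp: "partner W (partner W w0 i) i = w0" using partner_props[OF L V h0] by blast
    from we e have "w = w0 \<or> w = partner W w0 i" by auto
    then show "e = {w, partner W w i}"
    proof
      assume "w = w0" then show ?thesis using e by simp
    next
      assume "w = partner W w0 i"
      then show ?thesis using e pp by auto
    qed
  qed
  qed
qed


theorem proposition3p3:
  fixes N n :: nat and W :: "word set"
  assumes "finite W"
    and "\<forall>w\<in>W. length w = n \<and> is_word N w"
  shows "wsum W \<in> IS_perp N \<longleftrightarrow> (\<exists>E. switchboard N n W E)"
  using step1[OF assms] sb_LB LB_sb[OF _ assms(2)] by blast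

end
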